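(* Consider the control system described in the context and suppose Assumptions A1 and A2 hold. Then every $y\in\partial\mathcal{D}$ satisfies at least one of: (1) $y\in\partial\mathcal{D}_0$; (2) $y\in\partial\mathcal{D}_{s}\cap\mathcal{D}_0$; (3) $y\in(\mathcal{D}_{s}\cap\mathcal{D}_0)\setminus\mathcal{D}$.
   Context: System: $\dot x = f(x)+g(x)u$, $x\in\mathbb{R}^n$, $u\in\mathbb{R}^m$, where $f:\mathbb{R}^n\to\mathbb{R}^n$ and $g:\mathbb{R}^n\to\mathbb{R}^{n\times m}$ are locally Lipschitz and $f(0)=0$. Admissible controls are $\mathcal{U}=L^\infty([0,\infty);\mathbb{R}^m)$; $\phi(t;x,u)$ denotes the unique solution with $\phi(0;x,u)=x$ under $u\in\mathcal{U}$, and it is assumed to exist for all $t\ge 0$. $\mathbb{B}(x;r)$ is the closed Euclidean ball of radius $r$ about $x$. An obstacle set $U\subseteq\mathbb{R}^n$ is given and $S:=\mathbb{R}^n\setminus U$. Definitions: $\mathcal{D}_0=\{x:\exists u\in\mathcal{U},\ \lim_{t\to\infty}\|\phi(t;x,u)\|=0\}$; $\mathcal{D}=\{x:\exists u\in\mathcal{U},\ \lim_{t\to\infty}\|\phi(t;x,u)\|=0 \text{ and } \phi(t;x,u)\notin U\ \forall t\ge0\}$; exit time $\tau(x,u)=\inf\{t\ge0:\phi(t;x,u)\in U\}$ (with $\inf\emptyset=+\infty$); $\mathcal{D}_s=\{x:\exists u\in\mathcal{U},\ \tau(x,u)=\infty\}$. Assumption A1 (local stabilizability): there exist $r>0$, $k>0$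 and $\beta\in\mathcal{KL}$ such that for every $x\in\mathbb{B}(0;r)$ there is $u\in\mathcal{U}$ with $\|u\|_\infty\le k$ and $\|\phi(t;x,u)\|\le\beta(\|x\|,t)$ for all $t\ge0$. Assumption A2: (i) $S=\{x\in\mathbb{R}^n: h(x)<1\}$ for some locally Lipschitz $h:\mathbb{R}^n\to\mathbb{R}$; (ii) $S$ is open and connected; (iii) $\mathbb{B}(0;r)\subseteq S\subseteq\mathcal{D}_0$, with $r$ from Assumption A1. *)

theory Defs
  imports "HOL-Analysis.Analysis"
begin

definition loc_lipschitz :: "('a::metric_space \<Rightarrow> 'b::real_normed_vector) \<Rightarrow> bool" where
  "loc_lipschitz F \<longleftrightarrow>
     (\<forall>x. \<exists>\<delta>>0. \<exists>L. \<forall>y\<in>cball x \<delta>. \<forall>z\<in>cball x \<delta>. norm (F y - F z) \<le> L * dist y z)"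

(* Admissible controls: U = L^\<infinity>([0,\<infinity>); R^m), represented by measurable,
   essentially bounded functions on [0,\<infinity>) *)
definition admissible :: "(real \<Rightarrow> real^'m) set" where
  "admissible = {u. u \<in> borel_measurable (restrict_space lborel {0..}) \<and>
                    (\<exists>k. AE t in lborel. t \<ge> 0 \<longrightarrow> norm (u t) \<le> k)}"

definition ess_bounded_by :: "(real \<Rightarrow> real^'m) \<Rightarrow> real \<Rightarrow> bool" where
  "ess_bounded_by u k \<longleftrightarrow> (AE t in lborel. t \<ge> 0 \<longrightarrow> norm (u t) \<le> k)"

(* \<phi> is a (Caratheodory) solution of x' = f x + g x u on [0,\<infinity>) with \<phi>(0) = x *)
definition is_solution ::
  "(real^'n \<Rightarrow> real^'n) \<Rightarrow> (real^'n \<Rightarrow> real^'m^'n) \<Rightarrow> real^'n \<Rightarrow> (real \<Rightarrow> real^'m)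
     \<Rightarrow> (real \<Rightarrow> real^'n) \<Rightarrow> bool" where
  "is_solution f g x u \<phi> \<longleftrightarrow>
     continuous_on {0..} \<phi> \<and>
     (\<forall>t\<ge>0. (\<lambda>s. f (\<phi> s) + g (\<phi> s) *v u s) integrable_on {0..t} \<and>
             \<phi> t = x + integral {0..t} (\<lambda>s. f (\<phi> s) + g (\<phi> s) *v u s))"

definition class_K :: "(real \<Rightarrow> real) \<Rightarrow> bool" where
  "class_K \<alpha> \<longleftrightarrow> continuous_on {0..} \<alpha> \<and> strict_mono_on {0..} \<alpha> \<and> \<alpha> 0 = 0"

definition class_KL :: "(real \<Rightarrow> real \<Rightarrow> real) \<Rightarrow> bool" where
  "class_KL \<beta> \<longleftrightarrow> continuous_on ({0..} \<times> {0..}) (\<lambda>(s,t). \<beta> s t) \<and>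
     (\<forall>t\<ge>0. class_K (\<lambda>s. \<beta> s t)) \<and>
     (\<forall>s\<ge>0. antimono_on {0..} (\<lambda>t. \<beta> s t) \<and> ((\<lambda>t. \<beta> s t) \<longlongrightarrow> 0) at_top)"

definition D0_set :: "(real \<Rightarrow> real^'n \<Rightarrow> (real \<Rightarrow> real^'m) \<Rightarrow> real^'n) \<Rightarrow> (real^'n) set" where
  "D0_set \<phi> = {x. \<exists>u\<in>admissible. ((\<lambda>t. norm (\<phi> t x u)) \<longlongrightarrow> 0) at_top}"

definition D_set :: "(real \<Rightarrow> real^'n \<Rightarrow> (real \<Rightarrow> real^'m) \<Rightarrow> real^'n) \<Rightarrow> (real^'n) set
     \<Rightarrow> (real^'n) set" where
  "D_set \<phi> U = {x. \<exists>u\<in>admissible. ((\<lambda>t. norm (\<phi> t x u)) \<longlongrightarrow> 0) at_top \<and>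
                     (\<forall>t\<ge>0. \<phi> t x u \<notin> U)}"

(* exit time, with inf {} = +\<infinity> *)
definition exit_time :: "(real \<Rightarrow> real^'n \<Rightarrow> (real \<Rightarrow> real^'m) \<Rightarrow> real^'n) \<Rightarrow> (real^'n) set
     \<Rightarrow> real^'n \<Rightarrow> (real \<Rightarrow> real^'m) \<Rightarrow> ereal" where
  "exit_time \<phi> U x u = Inf (ereal ` {t. t \<ge> 0 \<and> \<phi> t x u \<in> U})"

definition Ds_set :: "(real \<Rightarrow> real^'n \<Rightarrow> (real \<Rightarrow> real^'m) \<Rightarrow> real^'n) \<Rightarrow> (real^'n) set
     \<Rightarrow> (real^'n) set" where
  "Ds_set \<phi> U = {x. \<exists>u\<in>admissible. exit_time \<phi> U x u = \<infinity>}"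

end

theory Submission
  imports Defs
begin

lemma mat_norm: "norm (A *v (x::real^'m)) \<le> norm (A::real^'m^'n) * norm x"
proof -
  have "(norm (A *v x))^2 = (\<Sum>i\<in>UNIV. ((A *v x)$i)^2)"
    by (simp add: norm_vec_def L2_set_def sum_nonneg)
  also have "\<dots> \<le> (\<Sum>i\<in>UNIV. (norm (A$i))^2 * (norm x)^2)"
  proof (rule sum_mono)
    fix i
    have "\<bar>(A *v x)$i\<bar> \<le> norm (A$i) * norm x"
      by (simp add: matrix_vector_mul_component Cauchy_Schwarz_ineq2)
    then have "\<bar>(A *v x)$i\<bar>^2 \<le> (norm (A$i) * norm x)^2"
      by (intro power_mono) auto
    then show "((A *v x)$i)^2 \<le> (norm (A$i))^2 * (norm x)^2"
      by (simp add: power_mult_distrib)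
  qed
  also have "\<dots> = (norm A * norm x)^2"
    by (simp add: norm_vec_def L2_set_def sum_distrib_right power_mult_distrib sum_nonneg)
  finally show ?thesis
    by (meson mult_nonneg_nonneg norm_ge_zero power2_le_imp_le)
qed

lemma gronwall:
  fixes w :: "real \<Rightarrow> real"
  assumes cont: "continuous_on {0..S} w" and C: "C \<ge> 0"
    and le: "\<And>t. t \<in> {0..S} \<Longrightarrow> w t \<le> a + C * integral {0..t} w"
    and t: "t \<in> {0..S}"
  shows "w t \<le> a * exp (C * t)"
proof -
  define V where "V = (\<lambda>t. integral {0..t} w)"
  define Q where "Q = (\<lambda>t. exp (- C * t) * (a + C * V t))"
  have dV: "(V has_real_derivative w s) (at s within {0..S})" if "s \<in> {0..S}" for s
    unfolding V_def by (rule integral_has_real_derivative[OF cont that])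
  have contV: "continuous_on {0..S} V"
    using dV by (meson DERIV_continuous continuous_at_imp_continuous_on continuous_on_eq_continuous_within)
  have contQ: "continuous_on {0..t} Q"
    unfolding Q_def using t by (auto intro!: continuous_intros continuous_on_subset[OF contV])
  have "Q t \<le> Q 0"
  proof (rule DERIV_nonpos_imp_decreasing_open[of 0 t Q])
    show "0 \<le> t" using t by simp
    show "continuous_on {0..t} Q" by (rule contQ)
    fix s assume s: "0 < s" "s < t"
    then have sS: "s \<in> {0..S}" using t by auto
    have "(V has_real_derivative w s) (at s)"
    proof -
      have "at s within {0..S} = at s"
        using s t by (intro at_within_interior) auto
      then show ?thesis using dV[OF sS] by simp
    qed
    then have "(Q has_real_derivative (- C * exp (- C * s) * (a + C * V s) + exp (- C * s) * (C * w s))) (at s)"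
      unfolding Q_def by (auto intro!: derivative_eq_intros)
    moreover have "- C * exp (- C * s) * (a + C * V s) + exp (- C * s) * (C * w s) \<le> 0"
    proof -
      have "w s \<le> a + C * V s" using le[OF sS] by (simp add: V_def)
      then have "C * w s \<le> C * (a + C * V s)" using C by (simp add: mult_left_mono)
      then have "exp (- C * s) * (C * w s) \<le> exp (- C * s) * (C * (a + C * V s))"
        by simp
      then show ?thesis by (simp add: algebra_simps)
    qed
    ultimately show "\<exists>y. (Q has_real_derivative y) (at s) \<and> y \<le> 0" by blast
  qed
  then have "exp (- C * t) * (a + C * V t) \<le> a" by (simp add: Q_def V_def)
  then have "a + C * V t \<le> a * exp (C * t)"
    by (simp add: exp_minus field_simps)
  then show ?thesis using le[OF t] by (simp add: V_def)
qed

lemma ae_neg: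
  assumes "AE x in lborel. P x"
  obtains N where "negligible N" "\<And>x. x \<notin> N \<Longrightarrow> P x"
proof -
  from AE_E[OF assms] obtain N where N: "{x \<in> space lborel. \<not> P x} \<subseteq> N" "emeasure lborel N = 0" "N \<in> sets lborel"
    by blast
  have "N \<in> null_sets lborel" using N by (simp add: null_setsI)
  then have "N \<in> null_sets lebesgue" by (rule null_sets_completionI)
  then have "negligible N" by (simp add: negligible_iff_null_sets)
  moreover have "\<And>x. x \<notin> N \<Longrightarrow> P x" using N(1) by auto
  ultimately show ?thesis using that by blast
qed

lemma neg_ae:
  assumes "negligible N" "\<And>x. x \<notin> N \<Longrightarrow> P x"
  shows "AE x in lborel. P x"
proof -
  have "N \<in> null_sets lebesgue" using assms(1) by (simp add: negligible_iff_null_sets)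
  then have "AE x in lebesgue. P x"
    by (rule AE_I') (use assms(2) in auto)
  then show ?thesis by (simp add: AE_completion_iff)
qed

lemma unif_lip:
  assumes "loc_lipschitz F" "compact K"
  shows "\<exists>\<epsilon>>0. \<exists>L\<ge>0. \<forall>q\<in>K. \<forall>y\<in>cball q \<epsilon>. \<forall>z\<in>cball q \<epsilon>. norm (F y - F z) \<le> L * dist y z"
proof (cases "K = {}")
  case True
  then show ?thesis by (intro exI[of _ 1] conjI exI[of _ 0]) auto
next
  case False
  obtain d L0 where dL: "\<And>x. d x > 0" "\<And>x y z. y \<in> cball x (d x) \<Longrightarrow> z \<in> cball x (d x) \<Longrightarrow> norm (F y - F z) \<le> L0 x * dist y z"
    using assms(1) unfolding loc_lipschitz_def by metis
  have "K \<subseteq> (\<Union>c\<in>K. ball c (d c / 2))"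
  proof
    fix x assume "x \<in> K"
    then show "x \<in> (\<Union>c\<in>K. ball c (d c / 2))" using dL(1)[of x] by force
  qed
  then obtain C' where C': "C' \<subseteq> K" "finite C'" "K \<subseteq> (\<Union>c\<in>C'. ball c (d c / 2))"
    using compactE_image[OF assms(2), of K "\<lambda>c. ball c (d c / 2)"] by auto
  have ne: "C' \<noteq> {}" using C' False by auto
  define e where "e = Min ((\<lambda>c. d c / 2) ` C')"
  define L where "L = max 0 (Max (L0 ` C'))"
  have e: "e > 0" unfolding e_def using C' ne dL(1) by (subst Min_gr_iff) auto
  have L0: "L \<ge> 0" by (simp add: L_def)
  have "\<forall>q\<in>K. \<forall>y\<in>cball q e. \<forall>z\<in>cball q e. norm (F y - F z) \<le> L * dist y z"
  proof (intro ballI)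
    fix q y z assume q: "q \<in> K" and y: "y \<in> cball q e" and z: "z \<in> cball q e"
    obtain c where c: "c \<in> C'" "q \<in> ball c (d c / 2)" using C' q by auto
    have "e \<le> d c / 2" unfolding e_def using C' c by (intro Min_le) auto
    then have "y \<in> cball c (d c)" "z \<in> cball c (d c)" using y z c
      by (auto simp: dist_commute) (smt (verit) dist_triangle)+
    then have "norm (F y - F z) \<le> L0 c * dist y z" by (rule dL(2))
    also have "\<dots> \<le> L * dist y z"
    proof (rule mult_right_mono)
      show "L0 c \<le> L" unfolding L_def using C' c by (auto intro!: le_max_iff_disj[THEN iffD2] disjI2)
    qed simp
    finally show "norm (F y - F z) \<le> L * dist y z" .
  qed
  then show ?thesis using e L0 by blast
qed


lemma compare:
  fixes f :: "real^'n \<Rightarrow> real^'n" and g :: "real^'n \<Rightarrow> real^'m^'n"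
  assumes s1: "is_solution f g x1 u1 p1" and s2: "is_solution f g x2 u2 p2"
    and M: "ess_bounded_by u1 M" "M \<ge> 0"
    and equ: "\<forall>s\<in>{0..<S}. u1 s = u2 s"
    and eps: "\<epsilon> > 0" "L \<ge> 0"
    and lip: "\<forall>q\<in>p1 ` {0..S}. \<forall>y\<in>cball q \<epsilon>. \<forall>z\<in>cball q \<epsilon>.
                 norm (f y - f z) \<le> L * dist y z \<and> norm (g y - g z) \<le> L * dist y z"
    and small: "norm (x1 - x2) * exp (L * (1 + M) * S) < \<epsilon>"
    and t: "t \<in> {0..S}"
  shows "norm (p1 t - p2 t) \<le> norm (x1 - x2) * exp (L * (1 + M) * t)"
proof -
  define C where "C = L * (1 + M)"
  define d where "d = norm (x1 - x2)"
  define \<delta> where "\<delta> = (\<lambda>t. norm (p1 t - p2 t))"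
  define F1 where "F1 = (\<lambda>s. f (p1 s) + g (p1 s) *v u1 s)"
  define F2 where "F2 = (\<lambda>s. f (p2 s) + g (p2 s) *v u2 s)"
  have C0: "C \<ge> 0" unfolding C_def using eps M by simp
  have S0: "S \<ge> 0" using t by simp
  have c1: "continuous_on {0..} p1" and e1: "\<And>t. t \<ge> 0 \<Longrightarrow> F1 integrable_on {0..t} \<and> p1 t = x1 + integral {0..t} F1"
    using s1 unfolding is_solution_def F1_def by auto
  have c2: "continuous_on {0..} p2" and e2: "\<And>t. t \<ge> 0 \<Longrightarrow> F2 integrable_on {0..t} \<and> p2 t = x2 + integral {0..t} F2"
    using s2 unfolding is_solution_def F2_def by auto
  have contd: "continuous_on {0..S} \<delta>"
    unfolding \<delta>_def
    by (intro continuous_intros continuous_on_subset[OF c1] continuous_on_subset[OF c2]) auto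
  have d0: "\<delta> 0 = d"
    using e1[of 0] e2[of 0] by (simp add: \<delta>_def d_def)
  obtain N where N: "negligible N" "\<And>s. s \<notin> N \<Longrightarrow> s \<ge> 0 \<longrightarrow> norm (u1 s) \<le> M"
    using M(1) unfolding ess_bounded_by_def by (rule ae_neg) blast
  have NS: "negligible (N \<union> {S})" using N(1) by simp
  have key: "\<delta> t \<le> d * exp (C * t)"
    if t0: "t0 \<in> {0..S}" and bd: "\<forall>s\<in>{0..t0}. \<delta> s \<le> \<epsilon>" and t: "t \<in> {0..t0}" for t0 t
  proof (rule gronwall[OF continuous_on_subset[OF contd] C0 _ t])
    show "{0..t0} \<subseteq> {0..S}" using t0 by auto
    fix t assume t: "t \<in> {0..t0}"
    define H where "H = (\<lambda>s. if s \<in> N \<union> {S} then 0 else F1 s - F2 s)"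
    have i1: "F1 integrable_on {0..t}" and i2: "F2 integrable_on {0..t}" using e1 e2 t by auto
    have iF: "(\<lambda>s. F1 s - F2 s) integrable_on {0..t}" using i1 i2 by (rule integrable_diff)
    have iH: "H integrable_on {0..t}"
      by (rule integrable_spike[OF iF NS]) (auto simp: H_def)
    have intH: "integral {0..t} (\<lambda>s. F1 s - F2 s) = integral {0..t} H"
      by (rule integral_spike[OF NS]) (auto simp: H_def)
    have contdt: "continuous_on {0..t} \<delta>" using t t0 by (auto intro: continuous_on_subset[OF contd])
    have idt: "\<delta> integrable_on {0..t}" using contdt by (rule integrable_continuous_real)
    have iCd: "(\<lambda>s. C * \<delta> s) integrable_on {0..t}" using contdt by (intro integrable_continuous_real continuous_intros)
    have pw: "norm (H s) \<le> C * \<delta> s" if s: "s \<in> {0..t}" for s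
    proof (cases "s \<in> N \<union> {S}")
      case True
      then show ?thesis using C0 by (simp add: H_def \<delta>_def)
    next
      case False
      then have sS: "s < S" and sN: "s \<notin> N" using s t t0 by auto
      have us: "u2 s = u1 s" using equ sS s by auto
      have uM: "norm (u1 s) \<le> M" using N(2)[OF sN] s by auto
      have q: "p1 s \<in> p1 ` {0..S}" using s t t0 by auto
      have "\<delta> s \<le> \<epsilon>" using bd s t by auto
      then have z: "p2 s \<in> cball (p1 s) \<epsilon>" by (simp add: \<delta>_def dist_norm)
      have y: "p1 s \<in> cball (p1 s) \<epsilon>" using eps by simp
      have lf: "norm (f (p1 s) - f (p2 s)) \<le> L * \<delta> s" and lg: "norm (g (p1 s) - g (p2 s)) \<le> L * \<delta> s"
        using lip q y z by (auto simp: \<delta>_def dist_norm)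
      have "F1 s - F2 s = (f (p1 s) - f (p2 s)) + (g (p1 s) - g (p2 s)) *v u1 s"
        by (simp add: F1_def F2_def us matrix_vector_mult_diff_rdistrib)
      then have "norm (F1 s - F2 s) \<le> norm (f (p1 s) - f (p2 s)) + norm (g (p1 s) - g (p2 s)) * norm (u1 s)"
        by (metis mat_norm norm_triangle_le add_left_mono)
      also have "\<dots> \<le> L * \<delta> s + (L * \<delta> s) * M"
        using lf lg uM eps by (intro add_mono mult_mono) (auto simp: \<delta>_def)
      also have "\<dots> = C * \<delta> s" by (simp add: C_def algebra_simps)
      finally show ?thesis using False by (simp add: H_def)
    qed
    have "p1 t - p2 t = (x1 - x2) + integral {0..t} (\<lambda>s. F1 s - F2 s)"
      using e1[of t] e2[of t] t integral_diff[OF i1 i2] by simp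
    then have "\<delta> t \<le> d + norm (integral {0..t} H)"
      unfolding \<delta>_def d_def intH by (metis norm_triangle_ineq)
    also have "norm (integral {0..t} H) \<le> integral {0..t} (\<lambda>s. C * \<delta> s)"
      by (rule integral_norm_bound_integral[OF iH iCd pw])
    also have "\<dots> = C * integral {0..t} \<delta>" by simp
    finally show "\<delta> t \<le> d + C * integral {0..t} \<delta>" by simp
  qed
  have expS: "d * exp (C * S) < \<epsilon>" using small by (simp add: C_def d_def)
  have expmono: "d * exp (C * s) \<le> d * exp (C * S)" if "s \<le> S" for s
    using that C0 by (intro mult_left_mono) (auto simp: d_def intro!: mult_left_mono)
  define A where "A = {0..S} \<inter> \<delta> -` {\<epsilon>..}"
  have "A = {}"
  proof (rule ccontr)
    assume ne: "A \<noteq> {}"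
    have clA: "closed A" unfolding A_def
      by (rule continuous_closed_preimage[OF contd]) auto
    have bdd: "bdd_below A" unfolding A_def by (rule bdd_belowI[of _ 0]) auto
    define t1 where "t1 = Inf A"
    have t1A: "t1 \<in> A" unfolding t1_def by (rule closed_contains_Inf[OF ne bdd clA])
    then have t1S: "t1 \<in> {0..S}" and dt1: "\<delta> t1 \<ge> \<epsilon>" by (auto simp: A_def)
    have "\<delta> 0 < \<epsilon>" using d0 expS expmono[OF S0] by simp
    then have t1pos: "t1 > 0" using t1S dt1 by (cases "t1 = 0") auto
    have lt: "\<delta> s < \<epsilon>" if "s \<in> {0..<t1}" for s
    proof (rule ccontr)
      assume "\<not> \<delta> s < \<epsilon>"
      then have "s \<in> A" using that t1S by (auto simp: A_def)
      then have "t1 \<le> s" unfolding t1_def using bdd by (rule cInf_lower)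
      then show False using that by auto
    qed
    have bd: "\<forall>s\<in>{0..t1}. \<delta> s \<le> \<epsilon>"
    proof
      fix s assume s: "s \<in> {0..t1}"
      have cl: "closure {0..<t1} = {0..t1}" using t1pos by simp
      show "\<delta> s \<le> \<epsilon>"
        by (rule continuous_le_on_closure[where f=\<delta> and S="{0..<t1}" and x=s and a=\<epsilon>]) (use cl s lt t1S in \<open>auto intro: continuous_on_subset[OF contd] less_imp_le\<close>)
    qed
    have "\<delta> t1 \<le> d * exp (C * t1)" using key[OF t1S bd] t1S by auto
    also have "\<dots> \<le> d * exp (C * S)" using expmono t1S by auto
    finally show False using expS dt1 by simp
  qed
  then have allb: "\<forall>s\<in>{0..S}. \<delta> s \<le> \<epsilon>" unfolding A_def by fastforce
  have "\<delta> t \<le> d * exp (C * t)" by (rule key[of S]) (use allb t S0 in auto)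
  then show ?thesis by (simp add: \<delta>_def d_def C_def)
qed



lemma unique:
  fixes f :: "real^'n \<Rightarrow> real^'n" and g :: "real^'n \<Rightarrow> real^'m^'n"
  assumes fl: "loc_lipschitz f" and gl: "loc_lipschitz g"
    and s1: "is_solution f g x u1 p1" and s2: "is_solution f g x u2 p2"
    and M: "ess_bounded_by u1 M"
    and equ: "\<forall>s\<in>{0..<S}. u1 s = u2 s"
    and t: "t \<in> {0..S}"
  shows "p1 t = p2 t"
proof -
  define M' where "M' = max M 0"
  have M'0: "M' \<ge> 0" by (simp add: M'_def)
  have "AE t in lborel. 0 \<le> t \<longrightarrow> norm (u1 t) \<le> M'"
    using M unfolding ess_bounded_by_def by (rule eventually_mono) (auto simp: M'_def)
  then have M': "ess_bounded_by u1 M'" "M' \<ge> 0" using M'0 by (simp_all add: ess_bounded_by_def)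
  have c1: "continuous_on {0..} p1" using s1 unfolding is_solution_def by blast
  have cK: "compact (p1 ` {0..S})"
    by (rule compact_continuous_image[OF continuous_on_subset[OF c1]]) auto
  then obtain e1 L1 e2 L2 where e1: "e1 > 0" "L1 \<ge> 0"
    "\<forall>q\<in>p1 ` {0..S}. \<forall>y\<in>cball q e1. \<forall>z\<in>cball q e1. norm (f y - f z) \<le> L1 * dist y z"
    and e2: "e2 > 0" "L2 \<ge> 0"
    "\<forall>q\<in>p1 ` {0..S}. \<forall>y\<in>cball q e2. \<forall>z\<in>cball q e2. norm (g y - g z) \<le> L2 * dist y z"
  proof -
    assume r: "\<And>e1 L1 e2 L2. 0 < e1 \<Longrightarrow> 0 \<le> L1 \<Longrightarrow> \<forall>q\<in>p1 ` {0..S}. \<forall>y\<in>cball q e1. \<forall>z\<in>cball q e1. norm (f y - f z) \<le> L1 * dist y z \<Longrightarrow>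
      0 < e2 \<Longrightarrow> 0 \<le> L2 \<Longrightarrow> \<forall>q\<in>p1 ` {0..S}. \<forall>y\<in>cball q e2. \<forall>z\<in>cball q e2. norm (g y - g z) \<le> L2 * dist y z \<Longrightarrow> thesis"
    from unif_lip[OF fl cK] obtain e1 L1 where "0 < e1" "0 \<le> L1" "\<forall>q\<in>p1 ` {0..S}. \<forall>y\<in>cball q e1. \<forall>z\<in>cball q e1. norm (f y - f z) \<le> L1 * dist y z"
      by blast
    moreover from unif_lip[OF gl cK] obtain e2 L2 where "0 < e2" "0 \<le> L2" "\<forall>q\<in>p1 ` {0..S}. \<forall>y\<in>cball q e2. \<forall>z\<in>cball q e2. norm (g y - g z) \<le> L2 * dist y z"
      by blast
    ultimately show thesis by (rule r)
  qed
  define e where "e = min e1 e2"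
  define L where "L = max L1 L2"
  have lip: "\<forall>q\<in>p1 ` {0..S}. \<forall>y\<in>cball q e. \<forall>z\<in>cball q e.
                 norm (f y - f z) \<le> L * dist y z \<and> norm (g y - g z) \<le> L * dist y z"
  proof (intro ballI conjI)
    fix q y z assume q: "q \<in> p1 ` {0..S}" and y: "y \<in> cball q e" and z: "z \<in> cball q e"
    have "norm (f y - f z) \<le> L1 * dist y z" using e1 q y z by (auto simp: e_def)
    also have "\<dots> \<le> L * dist y z" by (intro mult_right_mono) (auto simp: L_def)
    finally show "norm (f y - f z) \<le> L * dist y z" .
    have "norm (g y - g z) \<le> L2 * dist y z" using e2 q y z by (auto simp: e_def)
    also have "\<dots> \<le> L * dist y z" by (intro mult_right_mono) (auto simp: L_def)
    finally show "norm (g y - g z) \<le> L * dist y z" .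
  qed
  have "norm (p1 t - p2 t) \<le> norm (x - x) * exp (L * (1 + M') * t)"
    by (rule compare[OF s1 s2 M' equ _ _ lip _ t]) (use e1 e2 in \<open>auto simp: e_def L_def\<close>)
  then show ?thesis by simp
qed

lemma shift:
  fixes f :: "real^'n \<Rightarrow> real^'n" and g :: "real^'n \<Rightarrow> real^'m^'n"
  assumes s: "is_solution f g x w p" and T: "T \<ge> 0" and vw: "\<forall>\<sigma>\<ge>0. v \<sigma> = w (T + \<sigma>)"
  shows "is_solution f g (p T) v (\<lambda>s. p (T + s))"
proof -
  define F where "F = (\<lambda>\<tau>. f (p \<tau>) + g (p \<tau>) *v w \<tau>)"
  define G where "G = (\<lambda>\<sigma>. f (p (T + \<sigma>)) + g (p (T + \<sigma>)) *v v \<sigma>)"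
  have c: "continuous_on {0..} p" and e: "\<And>t. t \<ge> 0 \<Longrightarrow> F integrable_on {0..t} \<and> p t = x + integral {0..t} F"
    using s unfolding is_solution_def F_def by auto
  have cont: "continuous_on {0..} (\<lambda>s. p (T + s))"
    by (rule continuous_on_compose2[OF c]) (use T in \<open>auto intro!: continuous_intros\<close>)
  have "G integrable_on {0..s} \<and> p (T + s) = p T + integral {0..s} G" if s: "s \<ge> 0" for s
  proof -
    have iF: "F integrable_on {0..T+s}" using e[of "T+s"] s T by simp
    have iF2: "F integrable_on {T..T+s}" by (rule integrable_subinterval_real[OF iF]) (use T in auto)
    then have "(F has_integral integral {T..T+s} F) {T..T+s}" by (rule integrable_integral)
    then have "((\<lambda>x. F (x + T)) has_integral integral {T..T+s} F) {T-T..T+s-T}"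
      by (rule has_integral_shift_real_ivl)
    then have "((\<lambda>x. F (x + T)) has_integral integral {T..T+s} F) {0..s}" by simp
    then have hG: "(G has_integral integral {T..T+s} F) {0..s}"
      by (rule has_integral_eq[rotated]) (use vw in \<open>auto simp: F_def G_def add.commute\<close>)
    have "p (T + s) = x + integral {0..T+s} F" using e[of "T+s"] s T by simp
    also have "\<dots> = x + integral {0..T} F + integral {T..T+s} F"
      using Henstock_Kurzweil_Integration.integral_combine[of 0 T "T+s" F] iF T s by simp
    also have "\<dots> = p T + integral {0..s} G"
      using e[of T] T hG by (simp add: integral_unique)
    finally show ?thesis using hG by blast
  qed
  then show ?thesis using cont unfolding is_solution_def G_def by auto
qed


lemma concat_adm:
  assumes u: "u \<in> admissible" and v: "v \<in> admissible" and T: "T \<ge> 0"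
  shows "(\<lambda>t. if t < T then u t else v (max 0 (t - T))) \<in> admissible"
proof -
  have um: "u \<in> borel_measurable (restrict_space lborel {0..})" and vm: "v \<in> borel_measurable (restrict_space lborel {0..})"
    using u v by (auto simp: admissible_def)
  obtain k1 where k1: "AE t in lborel. t \<ge> 0 \<longrightarrow> norm (u t) \<le> k1" using u by (auto simp: admissible_def)
  obtain k2 where k2: "AE t in lborel. t \<ge> 0 \<longrightarrow> norm (v t) \<le> k2" using v by (auto simp: admissible_def)
  obtain N1 where N1: "negligible N1" "\<And>t. t \<notin> N1 \<Longrightarrow> t \<ge> 0 \<longrightarrow> norm (u t) \<le> k1"
    using k1 by (rule ae_neg) blast
  obtain N2 where N2: "negligible N2" "\<And>t. t \<notin> N2 \<Longrightarrow> t \<ge> 0 \<longrightarrow> norm (v t) \<le> k2"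
    using k2 by (rule ae_neg) blast
  have "(\<lambda>t::real. max 0 (t - T)) \<in> restrict_space lborel {0..} \<rightarrow>\<^sub>M restrict_space lborel {0..}"
  proof (rule measurable_restrict_space3)
    show "(\<lambda>t::real. max 0 (t - T)) \<in> lborel \<rightarrow>\<^sub>M lborel"
      by simp
  qed auto
  then have vm2: "(\<lambda>t. v (max 0 (t - T))) \<in> borel_measurable (restrict_space lborel {0..})"
    using vm by (rule measurable_compose)
  have meas: "(\<lambda>t. if t < T then u t else v (max 0 (t - T))) \<in> borel_measurable (restrict_space lborel {0..})"
    by (rule measurable_If[OF um vm2]) (auto simp: sets_restrict_space_iff)
  have "negligible (N1 \<union> (+) T ` N2)" using N1(1) N2(1) by (simp add: negligible_translation)
  then have "AE t in lborel. t \<ge> 0 \<longrightarrow> norm (if t < T then u t else v (max 0 (t - T))) \<le> max k1 k2"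
  proof (rule neg_ae)
    fix t assume t: "t \<notin> N1 \<union> (+) T ` N2"
    show "t \<ge> 0 \<longrightarrow> norm (if t < T then u t else v (max 0 (t - T))) \<le> max k1 k2"
    proof (cases "t < T")
      case True then show ?thesis using N1(2)[of t] t by auto
    next
      case False
      have "t - T \<notin> N2" using t by (metis UnCI add_diff_cancel_left' diff_add_cancel image_eqI)
      then show ?thesis using N2(2)[of "t - T"] False by auto
    qed
  qed
  then show ?thesis using meas unfolding admissible_def by blast
qed


lemma joint_lip:
  fixes f :: "real^'n \<Rightarrow> real^'n" and g :: "real^'n \<Rightarrow> real^'m^'n"
  assumes fl: "loc_lipschitz f" and gl: "loc_lipschitz g" and cK: "compact K"
  obtains e L where "e > 0" "L \<ge> 0" "\<forall>q\<in>K. \<forall>y\<in>cball q e. \<forall>z\<in>cball q e.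
                 norm (f y - f z) \<le> L * dist y z \<and> norm (g y - g z) \<le> L * dist y z"
proof -
  from unif_lip[OF fl cK] obtain e1 L1 where e1: "0 < e1" "0 \<le> L1" "\<forall>q\<in>K. \<forall>y\<in>cball q e1. \<forall>z\<in>cball q e1. norm (f y - f z) \<le> L1 * dist y z"
    by blast
  from unif_lip[OF gl cK] obtain e2 L2 where e2: "0 < e2" "0 \<le> L2" "\<forall>q\<in>K. \<forall>y\<in>cball q e2. \<forall>z\<in>cball q e2. norm (g y - g z) \<le> L2 * dist y z"
    by blast
  define e where "e = min e1 e2"
  define L where "L = max L1 L2"
  have lip: "\<forall>q\<in>K. \<forall>y\<in>cball q e. \<forall>z\<in>cball q e.
                 norm (f y - f z) \<le> L * dist y z \<and> norm (g y - g z) \<le> L * dist y z"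
  proof (intro ballI conjI)
    fix q y z assume q: "q \<in> K" and y: "y \<in> cball q e" and z: "z \<in> cball q e"
    have "norm (f y - f z) \<le> L1 * dist y z" using e1 q y z by (auto simp: e_def)
    also have "\<dots> \<le> L * dist y z" by (intro mult_right_mono) (auto simp: L_def)
    finally show "norm (f y - f z) \<le> L * dist y z" .
    have "norm (g y - g z) \<le> L2 * dist y z" using e2 q y z by (auto simp: e_def)
    also have "\<dots> \<le> L * dist y z" by (intro mult_right_mono) (auto simp: L_def)
    finally show "norm (g y - g z) \<le> L * dist y z" .
  qed
  show ?thesis by (rule that[OF _ _ lip]) (use e1 e2 in \<open>auto simp: e_def L_def\<close>)
qed

lemma D_open:
  fixes f :: "real^'n \<Rightarrow> real^'n"
    and g :: "real^'n \<Rightarrow> real^'m^'n"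
    and \<phi> :: "real \<Rightarrow> real^'n \<Rightarrow> (real \<Rightarrow> real^'m) \<Rightarrow> real^'n"
    and U :: "(real^'n) set"
  assumes fl: "loc_lipschitz f"
    and gl: "loc_lipschitz g"
    and sol: "\<And>x u. u \<in> admissible \<Longrightarrow> is_solution f g x u (\<lambda>t. \<phi> t x u)"
    and r_pos: "r > 0" and beta_KL: "class_KL \<beta>"
    and A1: "\<And>x. x \<in> cball 0 r \<Longrightarrow>
               \<exists>u\<in>admissible. ess_bounded_by u k \<and> (\<forall>t\<ge>0. norm (\<phi> t x u) \<le> \<beta> (norm x) t)"
    and S_open: "open (- U)"
    and ball_S: "cball 0 r \<subseteq> - U"
  shows "open (D_set \<phi> U)"
  unfolding open_contains_ball
proof
  fix y assume "y \<in> D_set \<phi> U"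
  then obtain u where u: "u \<in> admissible" and lim: "((\<lambda>t. norm (\<phi> t y u)) \<longlongrightarrow> 0) at_top"
    and stay: "\<forall>t\<ge>0. \<phi> t y u \<notin> U"
    unfolding D_set_def by blast
  have bK: "\<And>t. t \<ge> 0 \<Longrightarrow> class_K (\<lambda>s. \<beta> s t)"
    and bL: "\<And>s. s \<ge> 0 \<Longrightarrow> antimono_on {0..} (\<lambda>t. \<beta> s t) \<and> ((\<lambda>t. \<beta> s t) \<longlongrightarrow> 0) at_top"
    using beta_KL unfolding class_KL_def by auto
  have cb0: "continuous_on {0..} (\<lambda>s. \<beta> s 0)" and b00: "\<beta> 0 0 = 0"
    using bK[of 0] unfolding class_K_def by auto
  obtain \<rho>0 where \<rho>0: "\<rho>0 > 0" "\<And>s. s \<in> {0..} \<Longrightarrow> dist s 0 < \<rho>0 \<Longrightarrow> dist (\<beta> s 0) (\<beta> 0 0) < r"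
    using cb0 r_pos unfolding continuous_on_iff by (metis atLeast_iff order_refl)
  define \<rho> where "\<rho> = min (\<rho>0 / 2) r"
  have \<rho>pos: "\<rho> > 0" and \<rho>r: "\<rho> \<le> r" using \<rho>0 r_pos by (auto simp: \<rho>_def)
  have "\<rho> < \<rho>0" using \<rho>0(1) by (simp add: \<rho>_def)
  then have "\<bar>\<beta> \<rho> 0\<bar> < r" using \<rho>0(2)[of \<rho>] \<rho>pos b00 by (simp add: dist_real_def)
  then have b\<rho>: "\<beta> \<rho> 0 < r" by simp
  have bbnd: "\<beta> s t \<le> r" if "0 \<le> s" "s \<le> \<rho>" "0 \<le> t" for s t
  proof -
    have sm: "strict_mono_on {0..} (\<lambda>s. \<beta> s t)" using bK[OF that(3)] unfolding class_K_def by blast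
    have "\<beta> s t \<le> \<beta> \<rho> t"
      using strict_mono_on_leD[OF sm, of s \<rho>] that by simp
    have am: "antimono_on {0..} (\<lambda>t. \<beta> \<rho> t)" using bL[of \<rho>] \<rho>pos by simp
    have "\<beta> \<rho> t \<le> \<beta> \<rho> 0"
      using monotone_onD[OF am, of 0 t] that(3) by simp
    then show ?thesis using \<open>\<beta> s t \<le> \<beta> \<rho> t\<close> b\<rho> by simp
  qed
  have "eventually (\<lambda>t. norm (\<phi> t y u) < \<rho> / 2) at_top"
    using lim \<rho>pos by (intro order_tendstoD(2)) auto
  then obtain T0 where T0: "\<And>t. t \<ge> T0 \<Longrightarrow> norm (\<phi> t y u) < \<rho> / 2"
    unfolding eventually_at_top_linorder by blast
  define T where "T = max T0 0"
  have T: "T \<ge> 0" "norm (\<phi> T y u) < \<rho> / 2" using T0 by (auto simp: T_def)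
  have soly: "is_solution f g y u (\<lambda>t. \<phi> t y u)" by (rule sol[OF u])
  have cy: "continuous_on {0..} (\<lambda>t. \<phi> t y u)" using soly unfolding is_solution_def by blast
  define K where "K = (\<lambda>t. \<phi> t y u) ` {0..T}"
  have cK: "compact K" unfolding K_def
    by (rule compact_continuous_image[OF continuous_on_subset[OF cy]]) auto
  have KS: "K \<subseteq> - U" unfolding K_def using stay by auto
  obtain e1 where e1: "e1 > 0" "(\<Union>x\<in>K. ball x e1) \<subseteq> - U"
    using compact_subset_open_imp_ball_epsilon_subset[OF cK S_open KS] by blast
  obtain e L where eL: "e > 0" "L \<ge> 0" and lip0: "\<forall>q\<in>K. \<forall>y\<in>cball q e. \<forall>z\<in>cball q e.
                 norm (f y - f z) \<le> L * dist y z \<and> norm (g y - g z) \<le> L * dist y z"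
    using joint_lip[OF fl gl cK] by blast
  obtain k0 where k0: "AE t in lborel. t \<ge> 0 \<longrightarrow> norm (u t) \<le> k0" using u by (auto simp: admissible_def)
  define M where "M = max k0 0"
  have M0: "M \<ge> 0" by (simp add: M_def)
  have "AE t in lborel. 0 \<le> t \<longrightarrow> norm (u t) \<le> M"
    using k0 by (rule eventually_mono) (auto simp: M_def)
  then have Mu: "ess_bounded_by u M" by (simp add: ess_bounded_by_def)
  define C where "C = L * (1 + M)"
  have C0: "C \<ge> 0" using eL M0 by (simp add: C_def)
  define \<epsilon> where "\<epsilon> = min e (min e1 (\<rho> / 2))"
  have \<epsilon>: "\<epsilon> > 0" "\<epsilon> \<le> e" "\<epsilon> \<le> e1" "\<epsilon> \<le> \<rho> / 2" using eL e1 \<rho>pos by (auto simp: \<epsilon>_def)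
  have lip: "\<forall>q\<in>(\<lambda>t. \<phi> t y u) ` {0..T}. \<forall>y\<in>cball q \<epsilon>. \<forall>z\<in>cball q \<epsilon>.
                 norm (f y - f z) \<le> L * dist y z \<and> norm (g y - g z) \<le> L * dist y z"
    using lip0 \<epsilon>(2) unfolding K_def by (meson mem_cball order_trans)
  define rad where "rad = \<epsilon> / (2 * exp (C * T))"
  have rad: "rad > 0" using \<epsilon> by (simp add: rad_def)
  have "ball y rad \<subseteq> D_set \<phi> U"
  proof
    fix x' assume x': "x' \<in> ball y rad"
    have "norm (y - x') < rad" using x' by (simp add: dist_norm)
    then have small0: "norm (y - x') * exp (C * T) \<le> \<epsilon> / 2"
      by (simp add: rad_def field_simps)
    then have small: "norm (y - x') * exp (L * (1 + M) * T) < \<epsilon>" using \<epsilon> by (simp add: C_def)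
    have solx: "is_solution f g x' u (\<lambda>t. \<phi> t x' u)" by (rule sol[OF u])
    have close: "norm (\<phi> t y u - \<phi> t x' u) < \<epsilon>" if t: "t \<in> {0..T}" for t
    proof -
      have "norm (\<phi> t y u - \<phi> t x' u) \<le> norm (y - x') * exp (L * (1 + M) * t)"
        by (rule compare[OF soly solx Mu M0 _ \<epsilon>(1) eL(2) lip small t]) simp
      also have "\<dots> \<le> norm (y - x') * exp (C * T)"
        using t C0 by (auto simp: C_def intro!: mult_left_mono mult_left_mono[of t T C])
      finally show ?thesis using small0 \<epsilon> by simp
    qed
    have inS: "\<phi> t x' u \<notin> U" if t: "t \<in> {0..T}" for t
    proof -
      have "\<phi> t y u \<in> K" using t by (simp add: K_def)
      moreover have "\<phi> t x' u \<in> ball (\<phi> t y u) e1" using close[OF t] \<epsilon> by (simp add: dist_norm)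
      ultimately show ?thesis using e1(2) by blast
    qed
    define z where "z = \<phi> T x' u"
    have "norm z \<le> norm (\<phi> T y u) + norm (\<phi> T y u - \<phi> T x' u)"
      unfolding z_def by (metis norm_triangle_sub add.commute norm_minus_commute)
    then have nz: "norm z \<le> \<rho>" using T close[of T] \<epsilon> by simp
    then have "z \<in> cball 0 r" using \<rho>r by simp
    then obtain v where v: "v \<in> admissible" "ess_bounded_by v k" and vb: "\<forall>t\<ge>0. norm (\<phi> t z v) \<le> \<beta> (norm z) t"
      using A1 by blast
    define w where "w = (\<lambda>t. if t < T then u t else v (max 0 (t - T)))"
    have w: "w \<in> admissible" unfolding w_def by (rule concat_adm[OF u v(1) T(1)])
    have solw: "is_solution f g x' w (\<lambda>t. \<phi> t x' w)" by (rule sol[OF w])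
    have eq1: "\<phi> t x' w = \<phi> t x' u" if "t \<in> {0..T}" for t
      by (rule sym, rule unique[OF fl gl solx solw Mu _ that]) (auto simp: w_def)
    have solpsi: "is_solution f g (\<phi> T x' w) v (\<lambda>s. \<phi> (T + s) x' w)"
      by (rule shift[OF solw T(1)]) (auto simp: w_def)
    then have solpsi': "is_solution f g z v (\<lambda>s. \<phi> (T + s) x' w)"
      using eq1[of T] T by (simp add: z_def)
    have solz: "is_solution f g z v (\<lambda>t. \<phi> t z v)" by (rule sol[OF v(1)])
    have eq2: "\<phi> (T + s) x' w = \<phi> s z v" if "s \<ge> 0" for s
      by (rule sym, rule unique[OF fl gl solz solpsi' v(2), of s]) (use that in auto)
    have late: "\<phi> t x' w = \<phi> (t - T) z v" if "t \<ge> T" for t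
      using eq2[of "t - T"] that by simp
    have stayw: "\<forall>t\<ge>0. \<phi> t x' w \<notin> U"
    proof (intro allI impI)
      fix t :: real assume t: "t \<ge> 0"
      show "\<phi> t x' w \<notin> U"
      proof (cases "t \<le> T")
        case True then show ?thesis using eq1[of t] inS[of t] t by simp
      next
        case False
        then have "norm (\<phi> t x' w) \<le> \<beta> (norm z) (t - T)" using late[of t] vb by simp
        also have "\<dots> \<le> r" using bbnd[of "norm z" "t - T"] nz False by simp
        finally have "\<phi> t x' w \<in> cball 0 r" by simp
        then show ?thesis using ball_S by blast
      qed
    qed
    have limb: "((\<lambda>t. \<beta> (norm z) (t - T)) \<longlongrightarrow> 0) at_top"
    proof -
      have "((\<lambda>t. \<beta> (norm z) t) \<longlongrightarrow> 0) at_top" using bL[of "norm z"] by simp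
      moreover have "filterlim (\<lambda>t::real. t - T) at_top at_top"
        by (rule filterlim_tendsto_add_at_top[where c="-T" and f="\<lambda>_. -T", simplified])
           (simp_all add: filterlim_ident)
      ultimately show ?thesis by (rule filterlim_compose)
    qed
    have limw: "((\<lambda>t. norm (\<phi> t x' w)) \<longlongrightarrow> 0) at_top"
    proof (rule tendsto_sandwich[OF _ _ tendsto_const limb])
      show "\<forall>\<^sub>F t in at_top. 0 \<le> norm (\<phi> t x' w)" by simp
      show "\<forall>\<^sub>F t in at_top. norm (\<phi> t x' w) \<le> \<beta> (norm z) (t - T)"
        unfolding eventually_at_top_linorder
        by (rule exI[of _ T]) (use late vb in auto)
    qed
    show "x' \<in> D_set \<phi> U" unfolding D_set_def using w limw stayw by blast
  qed
  then show "\<exists>\<epsilon>>0. ball y \<epsilon> \<subseteq> D_set \<phi> U" using rad by blast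
qed

theorem mainTheorem2:
  fixes f :: "real^'n \<Rightarrow> real^'n"
    and g :: "real^'n \<Rightarrow> real^'m^'n"
    and \<phi> :: "real \<Rightarrow> real^'n \<Rightarrow> (real \<Rightarrow> real^'m) \<Rightarrow> real^'n"
    and U :: "(real^'n) set"
    and h :: "real^'n \<Rightarrow> real"
    and r k :: real
    and \<beta> :: "real \<Rightarrow> real \<Rightarrow> real"
  assumes f_lip: "loc_lipschitz f"
    and g_lip: "loc_lipschitz g"
    and f0: "f 0 = 0"
    and sol: "\<And>x u. u \<in> admissible \<Longrightarrow> is_solution f g x u (\<lambda>t. \<phi> t x u)"
    (* Assumption A1 *)
    and r_pos: "r > 0" and k_pos: "k > 0" and beta_KL: "class_KL \<beta>"
    and A1: "\<And>x. x \<in> cball 0 r \<Longrightarrow>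
               \<exists>u\<in>admissible. ess_bounded_by u k \<and> (\<forall>t\<ge>0. norm (\<phi> t x u) \<le> \<beta> (norm x) t)"
    (* Assumption A2 *)
    and h_lip: "loc_lipschitz h"
    and S_def: "- U = {x. h x < 1}"
    and S_open: "open (- U)" and S_conn: "connected (- U)"
    and ball_S: "cball 0 r \<subseteq> - U" and S_D0: "- U \<subseteq> D0_set \<phi>"
  shows "\<forall>y\<in>frontier (D_set \<phi> U).
           y \<in> frontier (D0_set \<phi>)
         \<or> y \<in> frontier (Ds_set \<phi> U) \<inter> D0_set \<phi>
         \<or> y \<in> (Ds_set \<phi> U \<inter> D0_set \<phi>) - D_set \<phi> U"
  proof
  fix y assume y: "y \<in> frontier (D_set \<phi> U)"
  have op: "open (D_set \<phi> U)"
    by (rule D_open[OF f_lip g_lip sol r_pos beta_KL A1 S_open ball_S])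
  have DD0: "D_set \<phi> U \<subseteq> D0_set \<phi>" unfolding D_set_def D0_set_def by blast
  have DDs: "D_set \<phi> U \<subseteq> Ds_set \<phi> U"
  proof
    fix x assume "x \<in> D_set \<phi> U"
    then obtain u where u: "u \<in> admissible" "\<forall>t\<ge>0. \<phi> t x u \<notin> U" unfolding D_set_def by blast
    then have e: "{t. t \<ge> 0 \<and> \<phi> t x u \<in> U} = {}" by auto
    have "exit_time \<phi> U x u = \<infinity>" unfolding exit_time_def e by (simp add: top_ereal_def)
    then show "x \<in> Ds_set \<phi> U" unfolding Ds_set_def using u by blast
  qed
  have yn: "y \<notin> D_set \<phi> U" and yc: "y \<in> closure (D_set \<phi> U)"
    using y op by (auto simp: frontier_def interior_open)
  show "y \<in> frontier (D0_set \<phi>)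
         \<or> y \<in> frontier (Ds_set \<phi> U) \<inter> D0_set \<phi>
         \<or> y \<in> (Ds_set \<phi> U \<inter> D0_set \<phi>) - D_set \<phi> U"
  proof (cases "y \<in> D0_set \<phi>")
    case False
    have "y \<in> closure (D0_set \<phi>)" using yc closure_mono[OF DD0] by blast
    then have "y \<in> frontier (D0_set \<phi>)" using False interior_subset[of "D0_set \<phi>"]
      by (auto simp: frontier_def)
    then show ?thesis by blast
  next
    case True
    show ?thesis
    proof (cases "y \<in> Ds_set \<phi> U")
      case True2: True
      then show ?thesis using True yn by blast
    next
      case False
      have "y \<in> closure (Ds_set \<phi> U)" using yc closure_mono[OF DDs] by blast
      then have "y \<in> frontier (Ds_set \<phi> U)" using False interior_subset[of "Ds_set \<phi> U"]
        by (auto simp: frontier_def)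
      then show ?thesis using True by blast
    qed
  qed
qed

end
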